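(* Let $f\colon X\to Y$ be a surjective morphism of non-degenerate cycle sets. Then there is a unique brace morphism $A(f)\colon A(X)\to A(Y)$ such that $A(f)\circ\sigma_X=\sigma_Y\circ f$, where $\sigma_X\colon X\to A(X)$ and $\sigma_Y\colon Y\to A(Y)$ are the canonical maps; moreover $A(f)$ is surjective.
   Context: A cycle set is a set $X$ with a binary operation $\cdot$ such that for every $x\in X$ the map $y\mapsto x\cdot y$ is a bijection of $X$, and $(x\cdot y)\cdot(x\cdot z)=(y\cdot x)\cdot(y\cdot z)$ for all $x,y,z$. It is non-degenerate if the map $x\mapsto x\cdot x$ is bijective. A morphism of cycle sets is a map $f$ with $f(x\cdot y)=f(x)\cdot f(y)$. A brace is an abelian group $(A,+)$ with a binary operation $\cdot$ making $A$ a cycle set and satisfying $a\cdot(b+c)=(a\cdot b)+(a\cdot c)$ and $(a+b)\cdot c=(a\cdot b)\cdot(a\cdot c)$; a brace morphism is an additive homomorphism preserving $\cdot$. For a non-degenerate cycle set $X$, $A_X$ denotes the unique brace structure on the free abelian group $\mathbb{Z}^{(X)}$ extending the operation of $X$. The socle of a brace $A$ is $\mathrm{Soc}(A)=\{a\in A: a\cdot b=b \text{ for all } b\in A\}$; it is an ideal, so $A/\mathrm{Soc}(A)$ is a brace. Set $A(X):=A_X/\mathrm{Soc}(A_X)$ and let $\sigma_X\colon X\to A(X)$ be the composite of the inclusion $X\hookrightarrow A_X$ with the quotient map. *)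

theory Defs
  imports Main
begin

definition cycle_set :: "'a set \<Rightarrow> ('a \<Rightarrow> 'a \<Rightarrow> 'a) \<Rightarrow> bool" where
  "cycle_set X op \<longleftrightarrow>
     (\<forall>x\<in>X. bij_betw (op x) X X) \<and>
     (\<forall>x\<in>X. \<forall>y\<in>X. \<forall>z\<in>X. op (op x y) (op x z) = op (op y x) (op y z))"

definition nondeg_cycle_set :: "'a set \<Rightarrow> ('a \<Rightarrow> 'a \<Rightarrow> 'a) \<Rightarrow> bool" where
  "nondeg_cycle_set X op \<longleftrightarrow> cycle_set X op \<and> bij_betw (\<lambda>x. op x x) X X"

definition cycle_set_hom ::
  "'a set \<Rightarrow> ('a \<Rightarrow> 'a \<Rightarrow> 'a) \<Rightarrow> 'b set \<Rightarrow> ('b \<Rightarrow> 'b \<Rightarrow> 'b) \<Rightarrow> ('a \<Rightarrow> 'b) \<Rightarrow> bool" where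
  "cycle_set_hom X op Y op' f \<longleftrightarrow>
     (\<forall>x\<in>X. f x \<in> Y) \<and> (\<forall>x\<in>X. \<forall>y\<in>X. f (op x y) = op' (f x) (f y))"

section \<open>Braces (given by carrier, addition, and the cycle-set operation)\<close>

definition abelian_group_on :: "'a set \<Rightarrow> ('a \<Rightarrow> 'a \<Rightarrow> 'a) \<Rightarrow> bool" where
  "abelian_group_on A pl \<longleftrightarrow>
     (\<forall>a\<in>A. \<forall>b\<in>A. pl a b \<in> A) \<and>
     (\<forall>a\<in>A. \<forall>b\<in>A. \<forall>c\<in>A. pl (pl a b) c = pl a (pl b c)) \<and>
     (\<forall>a\<in>A. \<forall>b\<in>A. pl a b = pl b a) \<and>
     (\<exists>z\<in>A. (\<forall>a\<in>A. pl z a = a) \<and> (\<forall>a\<in>A. \<exists>b\<in>A. pl a b = z))"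

definition brace :: "'a set \<Rightarrow> ('a \<Rightarrow> 'a \<Rightarrow> 'a) \<Rightarrow> ('a \<Rightarrow> 'a \<Rightarrow> 'a) \<Rightarrow> bool" where
  "brace A pl op \<longleftrightarrow>
     abelian_group_on A pl \<and> cycle_set A op \<and>
     (\<forall>a\<in>A. \<forall>b\<in>A. \<forall>c\<in>A. op a (pl b c) = pl (op a b) (op a c)) \<and>
     (\<forall>a\<in>A. \<forall>b\<in>A. \<forall>c\<in>A. op (pl a b) c = op (op a b) (op a c))"

definition brace_hom ::
  "'a set \<Rightarrow> ('a \<Rightarrow> 'a \<Rightarrow> 'a) \<Rightarrow> ('a \<Rightarrow> 'a \<Rightarrow> 'a) \<Rightarrow>
   'b set \<Rightarrow> ('b \<Rightarrow> 'b \<Rightarrow> 'b) \<Rightarrow> ('b \<Rightarrow> 'b \<Rightarrow> 'b) \<Rightarrow> ('a \<Rightarrow> 'b) \<Rightarrow> bool" where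
  "brace_hom A pl op B pl' op' h \<longleftrightarrow>
     (\<forall>a\<in>A. h a \<in> B) \<and>
     (\<forall>a\<in>A. \<forall>b\<in>A. h (pl a b) = pl' (h a) (h b)) \<and>
     (\<forall>a\<in>A. \<forall>b\<in>A. h (op a b) = op' (h a) (h b))"

definition socle :: "'a set \<Rightarrow> ('a \<Rightarrow> 'a \<Rightarrow> 'a) \<Rightarrow> 'a set" where
  "socle A op = {a\<in>A. \<forall>b\<in>A. op a b = b}"

definition coset :: "('a \<Rightarrow> 'a \<Rightarrow> 'a) \<Rightarrow> 'a set \<Rightarrow> 'a \<Rightarrow> 'a set" where
  "coset pl I a = (\<lambda>s. pl a s) ` I"

definition quot_carrier :: "'a set \<Rightarrow> ('a \<Rightarrow> 'a \<Rightarrow> 'a) \<Rightarrow> 'a set \<Rightarrow> 'a set set" where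
  "quot_carrier A pl I = coset pl I ` A"

definition quot_op :: "('a \<Rightarrow> 'a \<Rightarrow> 'a) \<Rightarrow> 'a set \<Rightarrow> ('a \<Rightarrow> 'a \<Rightarrow> 'a) \<Rightarrow> 'a set \<Rightarrow> 'a set \<Rightarrow> 'a set" where
  "quot_op pl I f C D = coset pl I (f (SOME a. a \<in> C) (SOME b. b \<in> D))"

definition free_ab :: "'a set \<Rightarrow> ('a \<Rightarrow> int) set" where
  "free_ab X = {v. finite {x. v x \<noteq> 0} \<and> {x. v x \<noteq> 0} \<subseteq> X}"

definition fplus :: "('a \<Rightarrow> int) \<Rightarrow> ('a \<Rightarrow> int) \<Rightarrow> ('a \<Rightarrow> int)" where
  "fplus v w = (\<lambda>x. v x + w x)"

definition basis :: "'a \<Rightarrow> ('a \<Rightarrow> int)" where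
  "basis x = (\<lambda>y. if y = x then 1 else 0)"

text \<open>The operation of A_X: the unique brace operation on Z^(X) extending that of X
  (made unique as a function by being undefined off the carrier).\<close>
definition AX_op :: "'a set \<Rightarrow> ('a \<Rightarrow> 'a \<Rightarrow> 'a) \<Rightarrow> ('a \<Rightarrow> int) \<Rightarrow> ('a \<Rightarrow> int) \<Rightarrow> ('a \<Rightarrow> int)" where
  "AX_op X op = (THE m. brace (free_ab X) fplus m \<and>
      (\<forall>x\<in>X. \<forall>y\<in>X. m (basis x) (basis y) = basis (op x y)) \<and>
      (\<forall>a b. (a \<notin> free_ab X \<or> b \<notin> free_ab X) \<longrightarrow> m a b = undefined))"

definition soc_AX :: "'a set \<Rightarrow> ('a \<Rightarrow> 'a \<Rightarrow> 'a) \<Rightarrow> ('a \<Rightarrow> int) set" where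
  "soc_AX X op = socle (free_ab X) (AX_op X op)"

text \<open>A(X) = A_X / Soc(A_X): carrier, addition, operation, and sigma_X.\<close>
definition AQ_carrier :: "'a set \<Rightarrow> ('a \<Rightarrow> 'a \<Rightarrow> 'a) \<Rightarrow> ('a \<Rightarrow> int) set set" where
  "AQ_carrier X op = quot_carrier (free_ab X) fplus (soc_AX X op)"

definition AQ_plus :: "'a set \<Rightarrow> ('a \<Rightarrow> 'a \<Rightarrow> 'a) \<Rightarrow> ('a \<Rightarrow> int) set \<Rightarrow> ('a \<Rightarrow> int) set \<Rightarrow> ('a \<Rightarrow> int) set" where
  "AQ_plus X op = quot_op fplus (soc_AX X op) fplus"

definition AQ_op :: "'a set \<Rightarrow> ('a \<Rightarrow> 'a \<Rightarrow> 'a) \<Rightarrow> ('a \<Rightarrow> int) set \<Rightarrow> ('a \<Rightarrow> int) set \<Rightarrow> ('a \<Rightarrow> int) set" where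
  "AQ_op X op = quot_op fplus (soc_AX X op) (AX_op X op)"

definition sigma :: "'a set \<Rightarrow> ('a \<Rightarrow> 'a \<Rightarrow> 'a) \<Rightarrow> 'a \<Rightarrow> ('a \<Rightarrow> int) set" where
  "sigma X op x = coset fplus (soc_AX X op) (basis x)"

end

theory Submission
  imports Defs
begin


definition ipow :: "('s \<Rightarrow> 's) \<Rightarrow> ('s \<Rightarrow> 's) \<Rightarrow> int \<Rightarrow> 's \<Rightarrow> 's" where
  "ipow F G n = (if 0 \<le> n then F ^^ nat n else G ^^ nat (-n))"

lemma funpow_comm_comp: "H \<circ> F = F \<circ> H \<Longrightarrow> H \<circ> F ^^ n = F ^^ n \<circ> H"
proof (induction n)
  case 0 then show ?case by simp
next
  case (Suc n)
  have "H \<circ> F ^^ Suc n = (H \<circ> F) \<circ> F ^^ n" by (simp add: comp_assoc)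
  also have "\<dots> = (F \<circ> H) \<circ> F ^^ n" by (simp only: Suc.prems)
  also have "\<dots> = F \<circ> (H \<circ> F ^^ n)" by (simp add: comp_assoc)
  also have "\<dots> = F ^^ Suc n \<circ> H" using Suc.IH[OF Suc.prems] by (simp only: comp_assoc funpow.simps)
  finally show ?case .
qed

locale invpair =
  fixes F G :: "'s \<Rightarrow> 's"
  assumes FG: "F \<circ> G = id" and GF: "G \<circ> F = id"
begin

lemma FG': "F (G s) = s" using FG by (metis comp_apply id_apply)
lemma GF': "G (F s) = s" using GF by (metis comp_apply id_apply)

lemma ipow_0[simp]: "ipow F G 0 = id" by (simp add: ipow_def)
lemma ipow_1: "ipow F G 1 = F" by (simp add: ipow_def)

lemma ipow_succ: "ipow F G (n + 1) = F \<circ> ipow F G n"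
proof (cases "0 \<le> n")
  case True
  then have "nat (n+1) = Suc (nat n)" by simp
  then show ?thesis using True by (simp add: ipow_def)
next
  case False
  define k where "k = nat (-(n+1))"
  have k: "nat (-n) = Suc k" and k2: "nat (-(n+1)) = k" using False by (simp_all add: k_def)
  show ?thesis
  proof (cases "0 \<le> n + 1")
    case True
    then have "n = -1" using False by simp
    then show ?thesis by (simp add: ipow_def FG)
  next
    case False2: False
    have "F \<circ> G ^^ Suc k = (F \<circ> G) \<circ> G ^^ k" by (simp add: comp_assoc funpow_Suc_right funpow_swap1 fun_eq_iff)
    then show ?thesis using False False2 k k2 by (simp add: ipow_def FG)
  qed
qed

lemma ipow_pred: "ipow F G (n - 1) = G \<circ> ipow F G n"
proof -
  have "ipow F G n = F \<circ> ipow F G (n - 1)" using ipow_succ[of "n - 1"] by simp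
  then have "G \<circ> ipow F G n = (G \<circ> F) \<circ> ipow F G (n - 1)" by (simp add: comp_assoc)
  then show ?thesis using GF by simp
qed

lemma ipow_add: "ipow F G (m + n) = ipow F G m \<circ> ipow F G n"
proof (induction m rule: int_induct[where k = 0])
  case base then show ?case by simp
next
  case (step1 i)
  have e: "i + 1 + n = (i + n) + 1" by simp
  have "ipow F G (i + 1 + n) = F \<circ> ipow F G (i + n)" unfolding e by (rule ipow_succ)
  then show ?case using step1 ipow_succ[of i] by (simp add: comp_assoc)
next
  case (step2 i)
  have e: "i - 1 + n = (i + n) - 1" by simp
  have "ipow F G (i - 1 + n) = G \<circ> ipow F G (i + n)" unfolding e by (rule ipow_pred)
  then show ?case using step2 ipow_pred[of i] by (simp add: comp_assoc)
qed

lemma ipow_comm: assumes "H \<circ> F = F \<circ> H" "H \<circ> G = G \<circ> H"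
  shows "H \<circ> ipow F G n = ipow F G n \<circ> H"
  using funpow_comm_comp[OF assms(1)] funpow_comm_comp[OF assms(2)] by (simp add: ipow_def)

end


definition supp :: "('x \<Rightarrow> int) \<Rightarrow> 'x set" where
  "supp a = {z. a z \<noteq> 0}"

locale comm_family =
  fixes Fs Gs :: "'x \<Rightarrow> 's \<Rightarrow> 's"
  assumes inv1: "Fs x \<circ> Gs x = id" and inv2: "Gs x \<circ> Fs x = id"
    and comm: "Fs x \<circ> Fs y = Fs y \<circ> Fs x"
begin

sublocale ip: invpair "Fs x" "Gs x" for x using inv1 inv2 by unfold_locales

abbreviation pw where "pw x n \<equiv> ipow (Fs x) (Gs x) n"

lemma FG_comm: "Fs x \<circ> Gs y = Gs y \<circ> Fs x"
proof -
  have "Gs y \<circ> Fs x = Gs y \<circ> Fs x \<circ> (Fs y \<circ> Gs y)" by (simp add: inv1)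
  also have "\<dots> = Gs y \<circ> (Fs y \<circ> Fs x) \<circ> Gs y" by (simp add: comp_assoc comm)
  also have "\<dots> = Fs x \<circ> Gs y" by (simp add: comp_assoc[symmetric] inv2)
  finally show ?thesis by simp
qed

lemma GG_comm: "Gs x \<circ> Gs y = Gs y \<circ> Gs x"
proof -
  have "Gs y \<circ> Gs x = (Gs y \<circ> Gs x) \<circ> (Fs y \<circ> Gs y)" by (simp add: inv1)
  also have "\<dots> = Gs y \<circ> (Gs x \<circ> Fs y) \<circ> Gs y" by (simp only: comp_assoc)
  also have "\<dots> = Gs y \<circ> (Fs y \<circ> Gs x) \<circ> Gs y" by (simp only: FG_comm)
  also have "\<dots> = (Gs y \<circ> Fs y) \<circ> Gs x \<circ> Gs y" by (simp only: comp_assoc)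
  also have "\<dots> = Gs x \<circ> Gs y" by (simp add: inv2)
  finally show ?thesis by simp
qed

lemma pw_comm: "pw x m \<circ> pw y n = pw y n \<circ> pw x m"
proof -
  have a: "Fs x \<circ> pw y n = pw y n \<circ> Fs x"
    by (rule ip.ipow_comm) (simp_all add: comm FG_comm)
  have b: "Gs x \<circ> pw y n = pw y n \<circ> Gs x"
    by (rule ip.ipow_comm) (simp_all add: FG_comm[symmetric] GG_comm)
  show ?thesis by (rule ip.ipow_comm[symmetric]) (simp_all add: a b)
qed

definition act :: "'x set \<Rightarrow> ('x \<Rightarrow> int) \<Rightarrow> 's \<Rightarrow> 's" where
  "act D a = Finite_Set.fold (\<lambda>x g. pw x (a x) \<circ> g) id D"

lemma cfc: "comp_fun_commute_on UNIV (\<lambda>x g. pw x (a x) \<circ> g)"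
  by unfold_locales (simp add: fun_eq_iff pw_comm[unfolded fun_eq_iff, simplified])

lemma act_empty[simp]: "act {} a = id" by (simp add: act_def)

lemma act_insert: "finite D \<Longrightarrow> x \<notin> D \<Longrightarrow> act (insert x D) a = pw x (a x) \<circ> act D a"
  unfolding act_def by (simp add: comp_fun_commute_on.fold_insert[OF cfc])

lemma act_comm: "finite D \<Longrightarrow> pw x n \<circ> act D a = act D a \<circ> pw x n"
proof (induction D rule: finite_induct)
  case empty then show ?case by simp
next
  case (insert y D)
  have "pw x n \<circ> act (insert y D) a = (pw x n \<circ> pw y (a y)) \<circ> act D a"
    using insert by (simp add: act_insert comp_assoc)
  also have "\<dots> = pw y (a y) \<circ> (pw x n \<circ> act D a)" by (simp only: comp_assoc[symmetric] pw_comm[of x n y "a y"])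
  also have "\<dots> = act (insert y D) a \<circ> pw x n" by (simp only: act_insert[OF insert(1,2)] comp_assoc insert.IH)
  finally show ?case .
qed

lemma act_add: "finite D \<Longrightarrow> act D (\<lambda>z. a z + b z) = act D b \<circ> act D a"
proof (induction D rule: finite_induct)
  case empty then show ?case by simp
next
  case (insert y D)
  have "act (insert y D) (\<lambda>z. a z + b z) = pw y (a y + b y) \<circ> (act D b \<circ> act D a)"
    by (simp only: act_insert[OF insert(1,2)] insert.IH)
  also have "\<dots> = pw y (b y) \<circ> (pw y (a y) \<circ> act D b) \<circ> act D a"
    using ip.ipow_add[of y "b y" "a y"] by (simp only: add.commute[of "b y"] comp_assoc)
  also have "\<dots> = pw y (b y) \<circ> act D b \<circ> (pw y (a y) \<circ> act D a)"
    using act_comm[OF insert(1), of y "a y" b] by (simp add: fun_eq_iff)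
  also have "\<dots> = act (insert y D) b \<circ> act (insert y D) a" using insert by (simp add: act_insert)
  finally show ?case .
qed

lemma act_extend: "finite E \<Longrightarrow> finite D \<Longrightarrow> supp a \<subseteq> D \<Longrightarrow> act (D \<union> E) a = act D a"
proof (induction E rule: finite_induct)
  case empty then show ?case by simp
next
  case (insert y E)
  show ?case
  proof (cases "y \<in> D \<union> E")
    case True
    then have "D \<union> insert y E = D \<union> E" by auto
    then show ?thesis using insert by simp
  next
    case False
    then have "a y = 0" using insert(5) by (auto simp: supp_def)
    then show ?thesis using insert False by (simp add: act_insert)
  qed
qed

lemma act_indep: "finite D \<Longrightarrow> finite E \<Longrightarrow> supp a \<subseteq> D \<Longrightarrow> supp a \<subseteq> E \<Longrightarrow> act D a = act E a"
  by (metis act_extend sup_commute)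

definition Act :: "('x \<Rightarrow> int) \<Rightarrow> 's \<Rightarrow> 's" where
  "Act a = act (supp a) a"

lemma Act_add: assumes "finite (supp a)" "finite (supp b)"
  shows "Act (\<lambda>z. a z + b z) = Act b \<circ> Act a"
proof -
  let ?D = "supp a \<union> supp b"
  have s: "supp (\<lambda>z. a z + b z) \<subseteq> ?D" by (auto simp: supp_def)
  have f: "finite ?D" using assms by simp
  have "Act (\<lambda>z. a z + b z) = act ?D (\<lambda>z. a z + b z)"
    unfolding Act_def using s f by (intro act_indep) (auto intro: finite_subset)
  also have "\<dots> = act ?D b \<circ> act ?D a" using f by (rule act_add)
  also have "act ?D b = Act b" unfolding Act_def using f assms by (intro act_indep) auto
  also have "act ?D a = Act a" unfolding Act_def using f assms by (intro act_indep) auto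
  finally show ?thesis .
qed

lemma Act_zero: "Act (\<lambda>_. 0) = id" by (simp add: Act_def supp_def)

lemma Act_basis: "Act (basis x) = Fs x"
proof -
  have "supp (basis x) = {x}" by (auto simp: supp_def basis_def)
  then show ?thesis by (simp add: Act_def act_insert basis_def ip.ipow_1)
qed

end


definition wt :: "('x \<Rightarrow> int) \<Rightarrow> nat" where
  "wt a = (\<Sum>z\<in>supp a. nat \<bar>a z\<bar>)"

lemma wt_on: "finite D \<Longrightarrow> supp a \<subseteq> D \<Longrightarrow> wt a = (\<Sum>z\<in>D. nat \<bar>a z\<bar>)"
  unfolding wt_def by (rule sum.mono_neutral_left) (auto simp: supp_def)

lemma free_ab_iff: "a \<in> free_ab X \<longleftrightarrow> finite (supp a) \<and> supp a \<subseteq> X"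
  by (simp add: free_ab_def supp_def)

lemma free_ab_plus: "a \<in> free_ab X \<Longrightarrow> b \<in> free_ab X \<Longrightarrow> (\<lambda>z. a z + b z) \<in> free_ab X"
proof -
  assume a: "a \<in> free_ab X" and b: "b \<in> free_ab X"
  have "supp (\<lambda>z. a z + b z) \<subseteq> supp a \<union> supp b" by (auto simp: supp_def)
  then show ?thesis using a b unfolding free_ab_iff by (meson finite_UnI finite_subset le_sup_iff subset_trans)
qed

lemma free_ab_neg: "a \<in> free_ab X \<Longrightarrow> (\<lambda>z. - a z) \<in> free_ab X"
  by (simp add: free_ab_def)

lemma free_ab_minus: "a \<in> free_ab X \<Longrightarrow> b \<in> free_ab X \<Longrightarrow> (\<lambda>z. a z - b z) \<in> free_ab X"
  using free_ab_plus[of a X "\<lambda>z. - b z"] free_ab_neg[of b X] by simp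

lemma free_ab_basis: "x \<in> X \<Longrightarrow> basis x \<in> free_ab X"
  by (simp add: free_ab_def basis_def)

lemma free_ab_zero: "(\<lambda>_. 0) \<in> free_ab X"
  by (simp add: free_ab_def)

lemma free_ab_induct[consumes 1, case_names zero plus minus]:
  assumes "a \<in> free_ab X" and "P (\<lambda>_. 0)"
    and pl: "\<And>a x. a \<in> free_ab X \<Longrightarrow> x \<in> X \<Longrightarrow> P a \<Longrightarrow> P (\<lambda>z. a z + basis x z)"
    and mi: "\<And>a x. a \<in> free_ab X \<Longrightarrow> x \<in> X \<Longrightarrow> P a \<Longrightarrow> P (\<lambda>z. a z - basis x z)"
  shows "P a"
proof -
  have "\<forall>a. wt a = n \<longrightarrow> a \<in> free_ab X \<longrightarrow> P a" for n
  proof (induction n rule: less_induct)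
    case (less n)
    show ?case
    proof (intro allI impI)
      fix a assume wa: "wt a = n" and af: "a \<in> free_ab X"
      show "P a"
      proof (cases "supp a = {}")
        case True
        then have "a = (\<lambda>_. 0)" by (auto simp: supp_def)
        then show ?thesis using assms(2) by simp
      next
        case False
        then obtain x where x: "x \<in> supp a" by auto
        have fin: "finite (supp a)" and sX: "supp a \<subseteq> X" using af by (auto simp: free_ab_iff)
        have xX: "x \<in> X" using x sX by auto
        show ?thesis
        proof (cases "a x > 0")
          case True
          define a' where "a' = (\<lambda>z. a z - basis x z)"
          have a'f: "a' \<in> free_ab X" unfolding a'_def by (rule free_ab_minus[OF af free_ab_basis[OF xX]])
          have s': "supp a' \<subseteq> supp a" using x by (auto simp: supp_def a'_def basis_def)
          have "wt a' = (\<Sum>z\<in>supp a. nat \<bar>a' z\<bar>)" by (rule wt_on[OF fin s'])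
          also have "\<dots> = nat \<bar>a' x\<bar> + (\<Sum>z\<in>supp a - {x}. nat \<bar>a' z\<bar>)"
            using fin x by (simp add: sum.remove)
          also have "(\<Sum>z\<in>supp a - {x}. nat \<bar>a' z\<bar>) = (\<Sum>z\<in>supp a - {x}. nat \<bar>a z\<bar>)"
            by (rule sum.cong) (auto simp: a'_def basis_def)
          also have "nat \<bar>a' x\<bar> = nat \<bar>a x\<bar> - 1" using True by (simp add: a'_def basis_def)
          finally have "wt a' < wt a" using True fin x
            by (simp add: wt_def sum.remove)
          then have "P a'" using less wa a'f by blast
          then have "P (\<lambda>z. a' z + basis x z)" by (rule pl[OF a'f xX])
          moreover have "(\<lambda>z. a' z + basis x z) = a" by (simp add: a'_def)
          ultimately show ?thesis by simp
        next
          case False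
          then have neg: "a x < 0" using x by (simp add: supp_def)
          define a' where "a' = (\<lambda>z. a z + basis x z)"
          have a'f: "a' \<in> free_ab X" unfolding a'_def by (rule free_ab_plus[OF af free_ab_basis[OF xX]])
          have s': "supp a' \<subseteq> supp a" using x by (auto simp: supp_def a'_def basis_def)
          have "wt a' = (\<Sum>z\<in>supp a. nat \<bar>a' z\<bar>)" by (rule wt_on[OF fin s'])
          also have "\<dots> = nat \<bar>a' x\<bar> + (\<Sum>z\<in>supp a - {x}. nat \<bar>a' z\<bar>)"
            using fin x by (simp add: sum.remove)
          also have "(\<Sum>z\<in>supp a - {x}. nat \<bar>a' z\<bar>) = (\<Sum>z\<in>supp a - {x}. nat \<bar>a z\<bar>)"
            by (rule sum.cong) (auto simp: a'_def basis_def)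
          also have "nat \<bar>a' x\<bar> = nat \<bar>a x\<bar> - 1" using neg by (simp add: a'_def basis_def)
          finally have "wt a' < wt a" using neg fin x
            by (simp add: wt_def sum.remove)
          then have "P a'" using less wa a'f by blast
          then have "P (\<lambda>z. a' z - basis x z)" by (rule mi[OF a'f xX])
          moreover have "(\<lambda>z. a' z - basis x z) = a" by (simp add: a'_def)
          ultimately show ?thesis by simp
        qed
      qed
    qed
  qed
  then show ?thesis using assms(1) by blast
qed




locale ncs =
  fixes X :: "'a set" and op :: "'a \<Rightarrow> 'a \<Rightarrow> 'a"
  assumes nd: "nondeg_cycle_set X op"
begin

lemma bij_op: "x \<in> X \<Longrightarrow> bij_betw (op x) X X"
  using nd by (simp add: nondeg_cycle_set_def cycle_set_def)
lemma cyc: "x \<in> X \<Longrightarrow> y \<in> X \<Longrightarrow> z \<in> X \<Longrightarrow> op (op x y) (op x z) = op (op y x) (op y z)"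
  using nd by (simp add: nondeg_cycle_set_def cycle_set_def)
lemma bijT: "bij_betw (\<lambda>x. op x x) X X"
  using nd by (simp add: nondeg_cycle_set_def)
lemma op_in: "x \<in> X \<Longrightarrow> y \<in> X \<Longrightarrow> op x y \<in> X"
  using bij_op bij_betwE by blast
lemma op_inj: "x \<in> X \<Longrightarrow> y \<in> X \<Longrightarrow> z \<in> X \<Longrightarrow> op x y = op x z \<Longrightarrow> y = z"
  using bij_op bij_betw_imp_inj_on inj_onD by metis
lemma T_inj: "x \<in> X \<Longrightarrow> y \<in> X \<Longrightarrow> op x x = op y y \<Longrightarrow> x = y"
  using bijT unfolding bij_betw_def inj_on_def by blast

definition sx where "sx u z = (if u \<in> X \<and> z \<in> X then op u z else z)"
definition sxi where "sxi u z = (if u \<in> X \<and> z \<in> X then inv_into X (op u) z else z)"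
definition Ti where "Ti v = (if v \<in> X then inv_into X (\<lambda>x. op x x) v else v)"
definition Fy where "Fy y p = sx (p y) \<circ> p"
definition Gy where "Gy y p = sxi (Ti (p y)) \<circ> p"

lemma inv_op_in: "u \<in> X \<Longrightarrow> z \<in> X \<Longrightarrow> inv_into X (op u) z \<in> X"
  by (metis bij_betw_def bij_op inv_into_into)
lemma op_inv_op: "u \<in> X \<Longrightarrow> z \<in> X \<Longrightarrow> op u (inv_into X (op u) z) = z"
  by (metis bij_betw_def bij_op f_inv_into_f)
lemma inv_op_op: "u \<in> X \<Longrightarrow> z \<in> X \<Longrightarrow> inv_into X (op u) (op u z) = z"
  by (metis bij_betw_def bij_op inv_into_f_f)

lemma sx_sxi: "sx u (sxi u z) = z"
  by (simp add: sx_def sxi_def inv_op_in op_inv_op)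
lemma sxi_sx: "sxi u (sx u z) = z"
  by (simp add: sx_def sxi_def op_in inv_op_op)

lemma Ti_in: "v \<in> X \<Longrightarrow> Ti v \<in> X"
  by (metis Ti_def bijT bij_betw_def inv_into_into)
lemma Ti_T: "v \<in> X \<Longrightarrow> op (Ti v) (Ti v) = v"
proof -
  assume v: "v \<in> X"
  have "v \<in> (\<lambda>x. op x x) ` X" using bijT v by (simp add: bij_betw_def)
  then show ?thesis using v by (simp add: Ti_def f_inv_into_f[where f="\<lambda>x. op x x"])
qed
lemma T_Ti: "u \<in> X \<Longrightarrow> Ti (op u u) = u"
  using inv_into_f_f[of "\<lambda>x. op x x" X u] bijT by (simp add: Ti_def op_in bij_betw_def)
lemma Ti_out: "v \<notin> X \<Longrightarrow> Ti v = v" by (simp add: Ti_def)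

lemma FG: "Fy y (Gy y p) = p"
proof (cases "p y \<in> X")
  case True
  define w where "w = Ti (p y)"
  have w: "w \<in> X" "op w w = p y" using True Ti_in Ti_T by (auto simp: w_def)
  have "sxi w (p y) = w" using w sxi_sx[of w w] by (simp add: sx_def)
  then show ?thesis by (simp add: Fy_def Gy_def fun_eq_iff sx_sxi w_def[symmetric])
next
  case False
  then have "sxi (Ti (p y)) = id" "sx (p y) = id" by (auto simp: sxi_def sx_def Ti_out fun_eq_iff)
  then show ?thesis using False by (simp add: Fy_def Gy_def)
qed

lemma GF: "Gy y (Fy y p) = p"
proof (cases "p y \<in> X")
  case True
  have "sx (p y) (p y) = op (p y) (p y)" using True by (simp add: sx_def)
  then have "Ti (sx (p y) (p y)) = p y" using True by (simp add: T_Ti)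
  then show ?thesis by (simp add: Fy_def Gy_def fun_eq_iff sxi_sx)
next
  case False
  then have "sx (p y) = id" by (auto simp: sx_def fun_eq_iff)
  then show ?thesis using False by (simp add: Fy_def Gy_def sxi_def Ti_out fun_eq_iff)
qed

lemma sx_comm: "u \<in> X \<Longrightarrow> v \<in> X \<Longrightarrow> sx (op u v) (sx u z) = sx (op v u) (sx v z)"
  by (simp add: sx_def op_in cyc)

lemma FF: "Fy x (Fy y p) = Fy y (Fy x p)"
proof -
  consider "p x \<in> X" "p y \<in> X" | "p x \<notin> X" | "p y \<notin> X" by blast
  then show ?thesis
  proof cases
    case 1
    then show ?thesis by (simp add: Fy_def fun_eq_iff sx_def[of _ "p x"] sx_def[of _ "p y"] sx_comm[symmetric])
  next
    case 2
    then have "sx (p x) = id" by (auto simp: sx_def fun_eq_iff)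
    moreover have "sx (p y) (p x) = p x" using 2 by (simp add: sx_def)
    ultimately show ?thesis by (simp add: Fy_def)
  next
    case 3
    then have "sx (p y) = id" by (auto simp: sx_def fun_eq_iff)
    moreover have "sx (p x) (p y) = p y" using 3 by (simp add: sx_def)
    ultimately show ?thesis by (simp add: Fy_def)
  qed
qed

sublocale cf: comm_family Fy Gy
  by unfold_locales (simp_all add: fun_eq_iff FG GF FF)

definition pi where "pi a = cf.Act a id"

definition PX where "PX p \<longleftrightarrow> bij p \<and> (\<forall>z. z \<notin> X \<longrightarrow> p z = z) \<and> p ` X = X"

lemma PX_id: "PX id" by (simp add: PX_def)

lemma PX_id': "PX (\<lambda>a. a)" using PX_id by (simp add: id_def)

lemma PX_comp: assumes "PX p" "PX q" shows "PX (p \<circ> q)"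
proof -
  have "(p \<circ> q) ` X = p ` (q ` X)" by (rule image_comp[symmetric])
  then show ?thesis using assms unfolding PX_def by (simp add: bij_comp)
qed

lemma PX_sx: "PX (sx u)"
proof (cases "u \<in> X")
  case True
  have b: "bij (sx u)" by (rule bij_betw_byWitness[where f'="sxi u"]) (auto simp: sx_sxi sxi_sx)
  have "sx u ` X = op u ` X" by (rule image_cong) (simp_all add: sx_def True)
  also have "\<dots> = X" using bij_op[OF True] by (simp add: bij_betw_def)
  finally show ?thesis using b by (simp add: PX_def sx_def)
next
  case False
  then have "sx u = id" by (auto simp: sx_def fun_eq_iff)
  then show ?thesis by (simp add: PX_id)
qed

lemma PX_sxi: "PX (sxi u)"
proof (cases "u \<in> X")
  case True
  have b: "bij (sxi u)" by (rule bij_betw_byWitness[where f'="sx u"]) (auto simp: sx_sxi sxi_sx)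
  have "sxi u ` X = inv_into X (op u) ` X" by (rule image_cong) (simp_all add: sxi_def True)
  also have "\<dots> = X" using bij_betw_inv_into[OF bij_op[OF True]] by (simp add: bij_betw_def)
  finally show ?thesis using b by (simp add: PX_def sxi_def)
next
  case False
  then have "sxi u = id" by (auto simp: sxi_def fun_eq_iff)
  then show ?thesis by (simp add: PX_id)
qed

lemma PX_Fy: "PX p \<Longrightarrow> PX (Fy y p)" by (simp add: Fy_def PX_comp PX_sx)
lemma PX_Gy: "PX p \<Longrightarrow> PX (Gy y p)" by (simp add: Gy_def PX_comp PX_sxi)

lemma Act_plus: "a \<in> free_ab X \<Longrightarrow> x \<in> X \<Longrightarrow> cf.Act (\<lambda>z. a z + basis x z) = Fy x \<circ> cf.Act a"
  using cf.Act_add[of a "basis x"] cf.Act_basis[of x] free_ab_basis[of x X] by (simp add: free_ab_iff)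

lemma Act_minus: assumes "a \<in> free_ab X" "x \<in> X"
  shows "cf.Act (\<lambda>z. a z - basis x z) = Gy x \<circ> cf.Act a"
proof -
  have m: "(\<lambda>z. a z - basis x z) \<in> free_ab X" by (rule free_ab_minus[OF assms(1) free_ab_basis[OF assms(2)]])
  have "cf.Act a = Fy x \<circ> cf.Act (\<lambda>z. a z - basis x z)"
    using Act_plus[OF m assms(2)] by simp
  then have "Gy x \<circ> cf.Act a = (Gy x \<circ> Fy x) \<circ> cf.Act (\<lambda>z. a z - basis x z)" by (simp add: comp_assoc)
  then show ?thesis by (simp add: cf.inv2)
qed

lemma pi_zero: "pi (\<lambda>_. 0) = id" by (simp add: pi_def cf.Act_zero)
lemma pi_plus: "a \<in> free_ab X \<Longrightarrow> x \<in> X \<Longrightarrow> pi (\<lambda>z. a z + basis x z) = Fy x (pi a)"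
  by (simp add: pi_def Act_plus)
lemma pi_minus: "a \<in> free_ab X \<Longrightarrow> x \<in> X \<Longrightarrow> pi (\<lambda>z. a z - basis x z) = Gy x (pi a)"
  by (simp add: pi_def Act_minus)
lemma pi_basis: "pi (basis x) = sx x"
  by (simp add: pi_def cf.Act_basis Fy_def)

lemma PX_pi: "a \<in> free_ab X \<Longrightarrow> PX (pi a)"
  by (induction rule: free_ab_induct) (simp_all add: pi_zero PX_id PX_id' pi_plus pi_minus PX_Fy PX_Gy)

lemma free_ab_comp: assumes "PX p" "b \<in> free_ab X" shows "b \<circ> inv p \<in> free_ab X"
proof -
  have bp: "bij p" using assms(1) by (simp add: PX_def)
  have "supp (b \<circ> inv p) = p ` supp b"
  proof (rule set_eqI)
    fix z show "z \<in> supp (b \<circ> inv p) \<longleftrightarrow> z \<in> p ` supp b"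
      using bp by (auto simp: supp_def bij_inv_eq_iff image_iff bij_is_inj) (metis bij_inv_eq_iff)
  qed
  moreover have "p ` supp b \<subseteq> X" using assms by (auto simp: PX_def free_ab_iff)
  ultimately show ?thesis using assms(2) by (simp add: free_ab_iff)
qed

lemma Fy_comp: "Fy y (r \<circ> p) = Fy (p y) r \<circ> p" by (simp add: Fy_def comp_assoc)
lemma Gy_comp: "Gy y (r \<circ> p) = Gy (p y) r \<circ> p" by (simp add: Gy_def comp_assoc)

lemma basis_inv: "bij p \<Longrightarrow> basis y \<circ> inv p = basis (p y)"
  by (auto simp: basis_def fun_eq_iff bij_inv_eq_iff) (metis bij_inv_eq_iff)+

lemma Act_shift: assumes "PX p" "b \<in> free_ab X"
  shows "cf.Act b (q \<circ> p) = cf.Act (b \<circ> inv p) q \<circ> p"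
  using assms(2)
proof (induction rule: free_ab_induct)
  case zero
  have "(\<lambda>_. 0::int) \<circ> inv p = (\<lambda>_. 0)" by (simp add: fun_eq_iff)
  then show ?case by (simp add: cf.Act_zero)
next
  case (plus b y)
  have bp: "bij p" and py: "p y \<in> X" using assms(1) plus(2) by (auto simp: PX_def)
  have bc: "b \<circ> inv p \<in> free_ab X" by (rule free_ab_comp[OF assms(1) plus(1)])
  have e: "(\<lambda>z. b z + basis y z) \<circ> inv p = (\<lambda>z. (b \<circ> inv p) z + basis (p y) z)"
    using basis_inv[OF bp, of y] by (simp add: fun_eq_iff)
  have "cf.Act (\<lambda>z. b z + basis y z) (q \<circ> p) = Fy y (cf.Act b (q \<circ> p))"
    by (simp only: Act_plus[OF plus(1,2)] comp_apply)
  also have "\<dots> = Fy y (cf.Act (b \<circ> inv p) q \<circ> p)" by (simp only: plus(3))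
  also have "\<dots> = Fy (p y) (cf.Act (b \<circ> inv p) q) \<circ> p" by (rule Fy_comp)
  also have "\<dots> = cf.Act (\<lambda>z. (b \<circ> inv p) z + basis (p y) z) q \<circ> p"
    by (subst Act_plus[OF bc py]) simp
  also have "\<dots> = cf.Act ((\<lambda>z. b z + basis y z) \<circ> inv p) q \<circ> p" by (simp only: e)
  finally show ?case .
next
  case (minus b y)
  have bp: "bij p" and py: "p y \<in> X" using assms(1) minus(2) by (auto simp: PX_def)
  have bc: "b \<circ> inv p \<in> free_ab X" by (rule free_ab_comp[OF assms(1) minus(1)])
  have e: "(\<lambda>z. b z - basis y z) \<circ> inv p = (\<lambda>z. (b \<circ> inv p) z - basis (p y) z)"
    using basis_inv[OF bp, of y] by (simp add: fun_eq_iff)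
  have "cf.Act (\<lambda>z. b z - basis y z) (q \<circ> p) = Gy y (cf.Act b (q \<circ> p))"
    by (simp only: Act_minus[OF minus(1,2)] comp_apply)
  also have "\<dots> = Gy y (cf.Act (b \<circ> inv p) q \<circ> p)" by (simp only: minus(3))
  also have "\<dots> = Gy (p y) (cf.Act (b \<circ> inv p) q) \<circ> p" by (rule Gy_comp)
  also have "\<dots> = cf.Act (\<lambda>z. (b \<circ> inv p) z - basis (p y) z) q \<circ> p"
    by (subst Act_minus[OF bc py]) simp
  also have "\<dots> = cf.Act ((\<lambda>z. b z - basis y z) \<circ> inv p) q \<circ> p" by (simp only: e)
  finally show ?case .
qed

definition M where "M a b = (if a \<in> free_ab X \<and> b \<in> free_ab X then b \<circ> inv (pi a) else undefined)"

lemma M_free: "a \<in> free_ab X \<Longrightarrow> b \<in> free_ab X \<Longrightarrow> M a b \<in> free_ab X"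
  by (simp add: M_def free_ab_comp PX_pi)

lemma cocycle: assumes "a \<in> free_ab X" "b \<in> free_ab X"
  shows "pi (\<lambda>z. a z + b z) = pi (M a b) \<circ> pi a"
proof -
  have "pi (\<lambda>z. a z + b z) = cf.Act b (pi a)"
    using cf.Act_add[of a b] assms by (simp add: pi_def free_ab_iff)
  also have "\<dots> = cf.Act b (id \<circ> pi a)" by simp
  also have "\<dots> = cf.Act (b \<circ> inv (pi a)) id \<circ> pi a" by (rule Act_shift[OF PX_pi[OF assms(1)] assms(2)])
  finally show ?thesis using assms by (simp add: M_def pi_def)
qed

end




context ncs
begin

lemma pi_bij: "a \<in> free_ab X \<Longrightarrow> bij (pi a)" using PX_pi by (simp add: PX_def)

lemma free_ab_comp2: assumes "PX p" "b \<in> free_ab X" shows "b \<circ> p \<in> free_ab X"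
proof -
  have bp: "bij p" using assms(1) by (simp add: PX_def)
  have "supp (b \<circ> p) = p -` supp b" by (auto simp: supp_def)
  moreover have "finite (p -` supp b)" using assms(2) bp
    by (intro finite_vimageI) (auto simp: free_ab_iff bij_is_inj)
  moreover have "p -` supp b \<subseteq> X"
  proof
    fix z assume "z \<in> p -` supp b"
    then have "p z \<in> X" using assms(2) by (auto simp: free_ab_iff)
    then show "z \<in> X" using assms(1) unfolding PX_def by metis
  qed
  ultimately show ?thesis by (simp add: free_ab_iff)
qed

lemma M_basis: "a \<in> free_ab X \<Longrightarrow> y \<in> X \<Longrightarrow> M a (basis y) = basis (pi a y)"
  by (simp add: M_def free_ab_basis basis_inv pi_bij)

lemma M_basis_basis: "x \<in> X \<Longrightarrow> y \<in> X \<Longrightarrow> M (basis x) (basis y) = basis (op x y)"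
  using PX_sx[of x] by (simp add: M_basis free_ab_basis pi_basis sx_def)

lemma M_zero: "b \<in> free_ab X \<Longrightarrow> M (\<lambda>_. 0) b = b"
  by (simp add: M_def free_ab_zero pi_zero)

lemma M_add: "a \<in> free_ab X \<Longrightarrow> b \<in> free_ab X \<Longrightarrow> c \<in> free_ab X \<Longrightarrow>
   M a (\<lambda>z. b z + c z) = (\<lambda>z. M a b z + M a c z)"
  by (simp add: M_def free_ab_plus fun_eq_iff)

lemma M_neg: "a \<in> free_ab X \<Longrightarrow> b \<in> free_ab X \<Longrightarrow> M a (\<lambda>z. - b z) = (\<lambda>z. - M a b z)"
  by (simp add: M_def free_ab_neg fun_eq_iff)

lemma M_comp: assumes "a \<in> free_ab X" "b \<in> free_ab X" "c \<in> free_ab X"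
  shows "M (\<lambda>z. a z + b z) c = M (M a b) (M a c)"
proof -
  have mab: "M a b \<in> free_ab X" and mac: "M a c \<in> free_ab X" using assms M_free by auto
  have "M (\<lambda>z. a z + b z) c = c \<circ> inv (pi (M a b) \<circ> pi a)"
    using assms by (simp add: M_def free_ab_plus cocycle)
  also have "\<dots> = c \<circ> (inv (pi a) \<circ> inv (pi (M a b)))"
    using pi_bij[OF mab] pi_bij[OF assms(1)] by (simp add: o_inv_distrib)
  also have "\<dots> = M (M a b) (M a c)" using assms mab mac by (simp add: M_def comp_assoc)
  finally show ?thesis .
qed

lemma M_bij: assumes "a \<in> free_ab X" shows "bij_betw (M a) (free_ab X) (free_ab X)"
proof (rule bij_betw_byWitness[where f'="\<lambda>b. b \<circ> pi a"])
  have b: "bij (pi a)" by (rule pi_bij[OF assms])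
  show "\<forall>x\<in>free_ab X. M a x \<circ> pi a = x" using assms b
    by (simp add: M_def fun_eq_iff bij_is_inj)
  show "\<forall>x\<in>free_ab X. M a (x \<circ> pi a) = x" using assms b free_ab_comp2[OF PX_pi[OF assms]]
    by (simp add: M_def fun_eq_iff bij_is_surj surj_f_inv_f)
  show "M a ` free_ab X \<subseteq> free_ab X" using assms M_free by auto
  show "(\<lambda>b. b \<circ> pi a) ` free_ab X \<subseteq> free_ab X" using free_ab_comp2[OF PX_pi[OF assms]] by auto
qed

lemma brace_M: "brace (free_ab X) fplus M"
proof -
  have ag: "abelian_group_on (free_ab X) fplus"
    unfolding abelian_group_on_def
  proof (intro conjI ballI)
    show "\<And>a b. a \<in> free_ab X \<Longrightarrow> b \<in> free_ab X \<Longrightarrow> fplus a b \<in> free_ab X"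
      by (simp add: fplus_def free_ab_plus)
    show "\<And>a b c. fplus (fplus a b) c = fplus a (fplus b c)" by (simp add: fplus_def add.assoc)
    show "\<And>a b. fplus a b = fplus b a" by (simp add: fplus_def add.commute)
    show "\<exists>z\<in>free_ab X. (\<forall>a\<in>free_ab X. fplus z a = a) \<and> (\<forall>a\<in>free_ab X. \<exists>b\<in>free_ab X. fplus a b = z)"
      by (rule bexI[of _ "\<lambda>_. 0"]) (auto simp: fplus_def free_ab_zero intro!: bexI[of _ "\<lambda>z. - _ z"] free_ab_neg)
  qed
  have cs: "cycle_set (free_ab X) M"
    unfolding cycle_set_def
  proof (intro conjI ballI)
    show "\<And>x. x \<in> free_ab X \<Longrightarrow> bij_betw (M x) (free_ab X) (free_ab X)" by (rule M_bij)
    fix a b c assume abc: "a \<in> free_ab X" "b \<in> free_ab X" "c \<in> free_ab X"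
    have "M (M a b) (M a c) = M (\<lambda>z. a z + b z) c" using M_comp abc by simp
    also have "\<dots> = M (\<lambda>z. b z + a z) c" by (simp add: add.commute)
    also have "\<dots> = M (M b a) (M b c)" using M_comp abc by simp
    finally show "M (M a b) (M a c) = M (M b a) (M b c)" .
  qed
  show ?thesis unfolding brace_def using ag cs
    by (simp add: fplus_def M_add M_comp)
qed

lemma M_out: "a \<notin> free_ab X \<or> b \<notin> free_ab X \<Longrightarrow> M a b = undefined"
  by (auto simp: M_def)


lemma M_minus_basis: "a \<in> free_ab X \<Longrightarrow> y \<in> X \<Longrightarrow> M a (\<lambda>z. - basis y z) = (\<lambda>z. - basis (pi a y) z)"
  by (simp add: M_neg free_ab_basis M_basis)

lemma pi_in: "a \<in> free_ab X \<Longrightarrow> y \<in> X \<Longrightarrow> pi a y \<in> X"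
  using PX_pi by (auto simp: PX_def)

context
  fixes m assumes bm: "brace (free_ab X) fplus m"
    and mb: "\<forall>x\<in>X. \<forall>y\<in>X. m (basis x) (basis y) = basis (op x y)"
begin

lemma m_bij: "a \<in> free_ab X \<Longrightarrow> bij_betw (m a) (free_ab X) (free_ab X)"
  using bm by (simp add: brace_def cycle_set_def)
lemma m_free: "a \<in> free_ab X \<Longrightarrow> b \<in> free_ab X \<Longrightarrow> m a b \<in> free_ab X"
  using m_bij bij_betwE by blast
lemma m_add: "a \<in> free_ab X \<Longrightarrow> b \<in> free_ab X \<Longrightarrow> c \<in> free_ab X \<Longrightarrow>
   m a (\<lambda>z. b z + c z) = (\<lambda>z. m a b z + m a c z)"
  using bm by (simp add: brace_def fplus_def)
lemma m_comp: "a \<in> free_ab X \<Longrightarrow> b \<in> free_ab X \<Longrightarrow> c \<in> free_ab X \<Longrightarrow>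
   m (\<lambda>z. a z + b z) c = m (m a b) (m a c)"
  using bm by (simp add: brace_def fplus_def)

lemma m_0: "a \<in> free_ab X \<Longrightarrow> m a (\<lambda>_. 0) = (\<lambda>_. 0)"
proof -
  assume a: "a \<in> free_ab X"
  have "m a (\<lambda>z. (\<lambda>_. 0) z + (\<lambda>_. 0) z) = (\<lambda>z. m a (\<lambda>_. 0) z + m a (\<lambda>_. 0) z)"
    using m_add[OF a free_ab_zero free_ab_zero] .
  then have "m a (\<lambda>_. 0) = (\<lambda>z. m a (\<lambda>_. 0) z + m a (\<lambda>_. 0) z)" by simp
  then show ?thesis by (metis (no_types, lifting) add_cancel_left_left ext)
qed

lemma m_neg: "a \<in> free_ab X \<Longrightarrow> b \<in> free_ab X \<Longrightarrow> m a (\<lambda>z. - b z) = (\<lambda>z. - m a b z)"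
proof -
  assume a: "a \<in> free_ab X" and b: "b \<in> free_ab X"
  have "m a (\<lambda>z. b z + - b z) = (\<lambda>z. m a b z + m a (\<lambda>z. - b z) z)"
    using m_add[OF a b free_ab_neg[OF b]] .
  then have "(\<lambda>_. 0) = (\<lambda>z. m a b z + m a (\<lambda>z. - b z) z)" using m_0[OF a] by simp
  then show ?thesis by (metis (no_types, lifting) add_eq_0_iff ext)
qed

lemma m_zero_left: "c \<in> free_ab X \<Longrightarrow> m (\<lambda>_. 0) c = c"
proof -
  assume c: "c \<in> free_ab X"
  have "m (\<lambda>z. (\<lambda>_. 0) z + (\<lambda>_. 0) z) c = m (m (\<lambda>_. 0) (\<lambda>_. 0)) (m (\<lambda>_. 0) c)"
    using m_comp[OF free_ab_zero free_ab_zero c] .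
  then have "m (\<lambda>_. 0) c = m (\<lambda>_. 0) (m (\<lambda>_. 0) c)" using m_0[OF free_ab_zero] by simp
  moreover have "inj_on (m (\<lambda>_. 0)) (free_ab X)" using m_bij[OF free_ab_zero] by (simp add: bij_betw_def)
  ultimately show ?thesis using c m_free[OF free_ab_zero c] by (metis inj_onD)
qed

lemma m_lin_eq:
  assumes a: "a \<in> free_ab X"
    and ext: "\<And>y. y \<in> X \<Longrightarrow> m a (basis y) = M a (basis y)"
    and c: "c \<in> free_ab X"
  shows "m a c = M a c"
  using c
proof (induction rule: free_ab_induct)
  case zero
  then show ?case using m_0[OF a] a by (simp add: M_def free_ab_zero fun_eq_iff)
next
  case (plus c x)
  then show ?case using m_add[OF a plus(1) free_ab_basis] M_add[OF a plus(1) free_ab_basis] ext by simp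
next
  case (minus c x)
  have e: "(\<lambda>z. c z - basis x z) = (\<lambda>z. c z + (\<lambda>z. - basis x z) z)" by simp
  show ?case unfolding e
    using m_add[OF a minus(1) free_ab_neg[OF free_ab_basis]] M_add[OF a minus(1) free_ab_neg[OF free_ab_basis]]
      m_neg[OF a free_ab_basis] M_neg[OF a free_ab_basis] ext minus by simp
qed

lemma m_basis_eq: "z \<in> X \<Longrightarrow> c \<in> free_ab X \<Longrightarrow> m (basis z) c = M (basis z) c"
  by (rule m_lin_eq) (simp_all add: free_ab_basis mb M_basis_basis)

lemma m_negbasis_eq: assumes z: "z \<in> X" and c: "c \<in> free_ab X"
  shows "m (\<lambda>u. - basis z u) c = M (\<lambda>u. - basis z u) c"
proof -
  define w where "w = Ti z"
  have w: "w \<in> X" "op w w = z" using z Ti_in Ti_T by (auto simp: w_def)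
  have ew: "basis w \<in> free_ab X" and nw: "(\<lambda>u. - basis w u) \<in> free_ab X"
    using w by (auto intro: free_ab_basis free_ab_neg)
  have nz: "(\<lambda>u. - basis z u) \<in> free_ab X" using z by (auto intro: free_ab_basis free_ab_neg)
  have zero: "(\<lambda>u. basis w u + - basis w u) = (\<lambda>_. 0)" by simp
  obtain c' where c': "c' \<in> free_ab X" "M (basis w) c' = c"
    using M_bij[OF ew] c by (metis bij_betw_iff_bijections)
  have "m (\<lambda>u. basis w u + - basis w u) c' = m (m (basis w) (\<lambda>u. - basis w u)) (m (basis w) c')"
    using m_comp[OF ew nw c'(1)] .
  then have "c' = m (\<lambda>u. - basis z u) (m (basis w) c')"
    using m_zero_left[OF c'(1)] m_neg[OF ew ew] mb w by (simp add: zero)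
  then have 1: "c' = m (\<lambda>u. - basis z u) c"
    using m_basis_eq[OF w(1) c'(1)] c' by simp
  have "M (\<lambda>u. basis w u + - basis w u) c' = M (M (basis w) (\<lambda>u. - basis w u)) (M (basis w) c')"
    using M_comp[OF ew nw c'(1)] .
  then have 2: "c' = M (\<lambda>u. - basis z u) c"
    using M_zero[OF c'(1)] M_neg[OF ew ew] M_basis_basis w c' by (simp add: zero)
  show ?thesis using 1 2 by simp
qed

lemma m_eq_M: "a \<in> free_ab X \<Longrightarrow> c \<in> free_ab X \<Longrightarrow> m a c = M a c"
proof (induction arbitrary: c rule: free_ab_induct)
  case zero
  then show ?case by (simp add: m_zero_left M_zero)
next
  case (plus a x)
  have ex: "basis x \<in> free_ab X" using plus(2) by (rule free_ab_basis)
  have "m (\<lambda>z. a z + basis x z) c = m (m a (basis x)) (m a c)"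
    by (rule m_comp[OF plus(1) ex plus(4)])
  also have "\<dots> = m (basis (pi a x)) (M a c)" using plus ex by (simp add: M_basis)
  also have "\<dots> = M (basis (pi a x)) (M a c)"
    by (rule m_basis_eq[OF pi_in[OF plus(1,2)] M_free[OF plus(1,4)]])
  also have "\<dots> = M (M a (basis x)) (M a c)" using plus by (simp add: M_basis)
  also have "\<dots> = M (\<lambda>z. a z + basis x z) c" using M_comp[OF plus(1) ex plus(4)] by simp
  finally show ?case .
next
  case (minus a x)
  have ex: "(\<lambda>z. - basis x z) \<in> free_ab X" using minus(2) by (intro free_ab_neg free_ab_basis)
  have e: "(\<lambda>z. a z - basis x z) = (\<lambda>z. a z + (\<lambda>z. - basis x z) z)" by simp
  have "m (\<lambda>z. a z + (\<lambda>z. - basis x z) z) c = m (m a (\<lambda>z. - basis x z)) (m a c)"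
    by (rule m_comp[OF minus(1) ex minus(4)])
  also have "\<dots> = m (\<lambda>z. - basis (pi a x) z) (M a c)"
    using minus m_neg[OF minus(1) free_ab_basis[OF minus(2)]] by (simp add: M_basis free_ab_basis)
  also have "\<dots> = M (\<lambda>z. - basis (pi a x) z) (M a c)"
    by (rule m_negbasis_eq[OF pi_in[OF minus(1,2)] M_free[OF minus(1,4)]])
  also have "\<dots> = M (M a (\<lambda>z. - basis x z)) (M a c)" using minus by (simp add: M_minus_basis)
  also have "\<dots> = M (\<lambda>z. a z + (\<lambda>z. - basis x z) z) c" using M_comp[OF minus(1) ex minus(4)] by simp
  finally show ?case unfolding e .
qed

end

lemma AX_op_eq: "AX_op X op = M"
  unfolding AX_op_def
proof (rule the_equality)
  show "brace (free_ab X) fplus M \<and> (\<forall>x\<in>X. \<forall>y\<in>X. M (basis x) (basis y) = basis (op x y)) \<and>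
    (\<forall>a b. a \<notin> free_ab X \<or> b \<notin> free_ab X \<longrightarrow> M a b = undefined)"
    using brace_M M_basis_basis M_out by blast
next
  fix m assume h: "brace (free_ab X) fplus m \<and> (\<forall>x\<in>X. \<forall>y\<in>X. m (basis x) (basis y) = basis (op x y)) \<and>
    (\<forall>a b. a \<notin> free_ab X \<or> b \<notin> free_ab X \<longrightarrow> m a b = undefined)"
  show "m = M"
  proof (rule ext, rule ext)
    fix a b
    show "m a b = M a b"
    proof (cases "a \<in> free_ab X \<and> b \<in> free_ab X")
      case True then show ?thesis using m_eq_M[of m a b] h by blast
    next
      case False then show ?thesis using h M_out[of a b] by auto
    qed
  qed
qed

end




context ncs
begin

abbreviation I where "I \<equiv> soc_AX X op"
abbreviation cs where "cs \<equiv> coset fplus I"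

lemma I_eq: "I = {a \<in> free_ab X. \<forall>b\<in>free_ab X. M a b = b}"
  by (simp add: soc_AX_def socle_def AX_op_eq)

lemma I_sub: "s \<in> I \<Longrightarrow> s \<in> free_ab X" by (simp add: I_eq)
lemma I_M: "s \<in> I \<Longrightarrow> b \<in> free_ab X \<Longrightarrow> M s b = b" by (simp add: I_eq)

lemma I_zero: "(\<lambda>_. 0) \<in> I" by (simp add: I_eq free_ab_zero M_zero)

lemma I_add: assumes "s \<in> I" "t \<in> I" shows "(\<lambda>z. s z + t z) \<in> I"
proof -
  have s: "s \<in> free_ab X" and t: "t \<in> free_ab X" using assms I_sub by auto
  have "M (\<lambda>z. s z + t z) b = b" if b: "b \<in> free_ab X" for b
    using M_comp[OF s t b] I_M[OF assms(1) t] I_M[OF assms(1) b] I_M[OF assms(2) b] by simp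
  then show ?thesis using free_ab_plus[OF s t] by (simp add: I_eq)
qed

lemma I_neg: assumes "s \<in> I" shows "(\<lambda>z. - s z) \<in> I"
proof -
  have s: "s \<in> free_ab X" using assms I_sub by auto
  have ns: "(\<lambda>z. - s z) \<in> free_ab X" using free_ab_neg[OF s] .
  have "M (\<lambda>z. - s z) b = b" if b: "b \<in> free_ab X" for b
  proof -
    have "M (\<lambda>z. s z + (\<lambda>z. - s z) z) b = M (M s (\<lambda>z. - s z)) (M s b)" by (rule M_comp[OF s ns b])
    then show ?thesis using M_zero[OF b] I_M[OF assms ns] I_M[OF assms b] by simp
  qed
  then show ?thesis using ns by (simp add: I_eq)
qed

lemma I_minus: "s \<in> I \<Longrightarrow> t \<in> I \<Longrightarrow> (\<lambda>z. s z - t z) \<in> I"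
  using I_add[of s "\<lambda>z. - t z"] I_neg[of t] by simp

lemma I_shift: assumes "s \<in> I" "a \<in> free_ab X" "c \<in> free_ab X"
  shows "M (\<lambda>z. a z + s z) c = M a c"
proof -
  have s: "s \<in> free_ab X" using assms I_sub by auto
  have "M (\<lambda>z. s z + a z) c = M (M s a) (M s c)" by (rule M_comp[OF s assms(2,3)])
  then show ?thesis using I_M[OF assms(1)] assms by (simp add: add.commute)
qed

lemma I_inv: assumes "s \<in> I" "a \<in> free_ab X" shows "M a s \<in> I"
proof -
  have s: "s \<in> free_ab X" using assms I_sub by auto
  have "M (M a s) d = d" if d: "d \<in> free_ab X" for d
  proof -
    obtain c where c: "c \<in> free_ab X" "M a c = d"
      using M_bij[OF assms(2)] d by (metis bij_betw_iff_bijections)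
    have "M (M a s) (M a c) = M (\<lambda>z. a z + s z) c" using M_comp[OF assms(2) s c(1)] by simp
    also have "\<dots> = M a c" by (rule I_shift[OF assms(1,2) c(1)])
    finally show ?thesis using c by simp
  qed
  then show ?thesis using M_free[OF assms(2) s] by (simp add: I_eq)
qed

lemma cs_def': "cs a = (\<lambda>s z. a z + s z) ` I" by (simp add: coset_def fplus_def)

lemma cs_self: "a \<in> cs a"
proof -
  have "a = (\<lambda>z. a z + (\<lambda>_. 0) z)" by simp
  then show ?thesis unfolding cs_def' by (rule rev_image_eqI[OF I_zero])
qed

lemma cs_sub: "a \<in> free_ab X \<Longrightarrow> cs a \<subseteq> free_ab X"
  unfolding cs_def' using I_sub free_ab_plus by blast

lemma cs_eq_iff: assumes "a \<in> free_ab X" "b \<in> free_ab X"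
  shows "cs a = cs b \<longleftrightarrow> (\<lambda>z. a z - b z) \<in> I"
proof
  assume "cs a = cs b"
  then have "a \<in> cs b" using cs_self by metis
  then obtain s where "s \<in> I" "a = (\<lambda>z. b z + s z)" unfolding cs_def' by blast
  then show "(\<lambda>z. a z - b z) \<in> I" by simp
next
  assume t: "(\<lambda>z. a z - b z) \<in> I"
  show "cs a = cs b"
  proof
    show "cs a \<subseteq> cs b"
    proof
      fix v assume "v \<in> cs a"
      then obtain s where s: "s \<in> I" "v = (\<lambda>z. a z + s z)" unfolding cs_def' by blast
      have "(\<lambda>z. (\<lambda>z. a z - b z) z + s z) \<in> I" by (rule I_add[OF t s(1)])
      moreover have "v = (\<lambda>z. b z + (\<lambda>z. (\<lambda>z. a z - b z) z + s z) z)" using s by auto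
      ultimately show "v \<in> cs b" unfolding cs_def' by (rule rev_image_eqI[where x="\<lambda>z. a z - b z + s z"])
    qed
  next
    show "cs b \<subseteq> cs a"
    proof
      fix v assume "v \<in> cs b"
      then obtain s where s: "s \<in> I" "v = (\<lambda>z. b z + s z)" unfolding cs_def' by blast
      have "(\<lambda>z. s z - (\<lambda>z. a z - b z) z) \<in> I" by (rule I_minus[OF s(1) t])
      moreover have "v = (\<lambda>z. a z + (\<lambda>z. s z - (\<lambda>z. a z - b z) z) z)" using s by auto
      ultimately show "v \<in> cs a" unfolding cs_def' by (rule rev_image_eqI[where x="\<lambda>z. s z - (a z - b z)"])
    qed
  qed
qed

lemma cs_mem: assumes "a \<in> free_ab X" "v \<in> cs a" shows "v \<in> free_ab X" "cs v = cs a"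
proof -
  show v: "v \<in> free_ab X" using cs_sub[OF assms(1)] assms(2) by blast
  obtain s where s: "s \<in> I" "v = (\<lambda>z. a z + s z)" using assms(2) unfolding cs_def' by blast
  then have "(\<lambda>z. v z - a z) \<in> I" by simp
  then show "cs v = cs a" using cs_eq_iff[OF v assms(1)] by simp
qed

lemma some_cs: assumes "a \<in> free_ab X"
  shows "(SOME v. v \<in> cs a) \<in> free_ab X" "cs (SOME v. v \<in> cs a) = cs a"
proof -
  have "(SOME v. v \<in> cs a) \<in> cs a" using cs_self by (metis someI)
  then show "(SOME v. v \<in> cs a) \<in> free_ab X" "cs (SOME v. v \<in> cs a) = cs a"
    using cs_mem[OF assms] by auto
qed

lemma AQ_plus_cs: assumes "a \<in> free_ab X" "b \<in> free_ab X"
  shows "AQ_plus X op (cs a) (cs b) = cs (\<lambda>z. a z + b z)"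
proof -
  define a' where "a' = (SOME v. v \<in> cs a)"
  define b' where "b' = (SOME v. v \<in> cs b)"
  have a': "a' \<in> free_ab X" "cs a' = cs a" using some_cs[OF assms(1)] by (auto simp: a'_def)
  have b': "b' \<in> free_ab X" "cs b' = cs b" using some_cs[OF assms(2)] by (auto simp: b'_def)
  have ia: "(\<lambda>z. a' z - a z) \<in> I" using cs_eq_iff[OF a'(1) assms(1)] a' by simp
  have ib: "(\<lambda>z. b' z - b z) \<in> I" using cs_eq_iff[OF b'(1) assms(2)] b' by simp
  have "(\<lambda>z. (\<lambda>z. a' z - a z) z + (\<lambda>z. b' z - b z) z) \<in> I" by (rule I_add[OF ia ib])
  then have "(\<lambda>z. (\<lambda>z. a' z + b' z) z - (\<lambda>z. a z + b z) z) \<in> I" by (simp add: algebra_simps)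
  then have "cs (\<lambda>z. a' z + b' z) = cs (\<lambda>z. a z + b z)"
    using cs_eq_iff free_ab_plus a'(1) b'(1) assms by blast
  then show ?thesis by (simp add: AQ_plus_def quot_op_def a'_def[symmetric] b'_def[symmetric] fplus_def)
qed

lemma AQ_op_cs: assumes "a \<in> free_ab X" "b \<in> free_ab X"
  shows "AQ_op X op (cs a) (cs b) = cs (M a b)"
proof -
  define a' where "a' = (SOME v. v \<in> cs a)"
  define b' where "b' = (SOME v. v \<in> cs b)"
  have a': "a' \<in> free_ab X" "cs a' = cs a" using some_cs[OF assms(1)] by (auto simp: a'_def)
  have b': "b' \<in> free_ab X" "cs b' = cs b" using some_cs[OF assms(2)] by (auto simp: b'_def)
  have ia: "(\<lambda>z. a' z - a z) \<in> I" using cs_eq_iff[OF a'(1) assms(1)] a' by simp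
  have ib: "(\<lambda>z. b' z - b z) \<in> I" using cs_eq_iff[OF b'(1) assms(2)] b' by simp
  have ea: "a' = (\<lambda>z. a z + (\<lambda>z. a' z - a z) z)" by simp
  have eb: "b' = (\<lambda>z. b z + (\<lambda>z. b' z - b z) z)" by simp
  have "M a' b' = M a b'" using I_shift[OF ia assms(1) b'(1)] ea by simp
  also have "\<dots> = (\<lambda>z. M a b z + M a (\<lambda>z. b' z - b z) z)"
    using M_add[OF assms(1) assms(2) I_sub[OF ib]] eb by simp
  finally have e: "M a' b' = (\<lambda>z. M a b z + M a (\<lambda>z. b' z - b z) z)" .
  have "M a (\<lambda>z. b' z - b z) \<in> I" by (rule I_inv[OF ib assms(1)])
  then have "(\<lambda>z. M a' b' z - M a b z) \<in> I" using e by simp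
  then have "cs (M a' b') = cs (M a b)"
    using cs_eq_iff M_free a'(1) b'(1) assms by blast
  then show ?thesis by (simp add: AQ_op_def quot_op_def a'_def[symmetric] b'_def[symmetric] AX_op_eq)
qed

lemma AQ_carrier_eq: "AQ_carrier X op = cs ` free_ab X"
  by (simp add: AQ_carrier_def quot_carrier_def)

lemma sigma_eq: "sigma X op x = cs (basis x)"
  by (simp add: sigma_def)

end




locale ncs_hom = SX: ncs X opX + SY: ncs Y opY
  for X :: "'a set" and opX and Y :: "'b set" and opY +
  fixes f :: "'a \<Rightarrow> 'b"
  assumes hom: "cycle_set_hom X opX Y opY f" and fsurj: "f ` X = Y"
begin

lemma f_in: "x \<in> X \<Longrightarrow> f x \<in> Y" using hom by (simp add: cycle_set_hom_def)
lemma f_op: "x \<in> X \<Longrightarrow> y \<in> X \<Longrightarrow> f (opX x y) = opY (f x) (f y)"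
  using hom by (simp add: cycle_set_hom_def)

definition push :: "('a \<Rightarrow> int) \<Rightarrow> 'b \<Rightarrow> int" where
  "push a = (\<lambda>y. sum a {x. a x \<noteq> 0 \<and> f x = y})"

lemma push_on: assumes "finite D" "supp a \<subseteq> D" shows "push a y = sum a {x \<in> D. f x = y}"
  unfolding push_def using assms by (intro sum.mono_neutral_left) (auto simp: supp_def)

lemma push_free: assumes "a \<in> free_ab X" shows "push a \<in> free_ab Y"
proof -
  have "supp (push a) \<subseteq> f ` supp a"
  proof
    fix y assume "y \<in> supp (push a)"
    then have "sum a {x. a x \<noteq> 0 \<and> f x = y} \<noteq> 0" by (simp add: supp_def push_def)
    then have "{x. a x \<noteq> 0 \<and> f x = y} \<noteq> {}" by (metis sum.empty)
    then obtain x where "a x \<noteq> 0" "f x = y" by blast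
    then show "y \<in> f ` supp a" by (auto simp: supp_def)
  qed
  moreover have "f ` supp a \<subseteq> Y" using assms f_in by (auto simp: free_ab_iff)
  ultimately show ?thesis using assms by (auto simp: free_ab_iff intro: finite_subset)
qed

lemma push_add: assumes "a \<in> free_ab X" "b \<in> free_ab X"
  shows "push (\<lambda>z. a z + b z) = (\<lambda>y. push a y + push b y)"
proof
  fix y
  let ?D = "supp a \<union> supp b"
  have f: "finite ?D" using assms by (simp add: free_ab_iff)
  have "push (\<lambda>z. a z + b z) y = (\<Sum>x\<in>{x \<in> ?D. f x = y}. a x + b x)"
    by (rule push_on[OF f]) (auto simp: supp_def)
  also have "\<dots> = push a y + push b y"
    by (simp add: sum.distrib push_on[OF f, of a] push_on[OF f, of b] supp_def)
  finally show "push (\<lambda>z. a z + b z) y = push a y + push b y" .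
qed

lemma push_neg: "push (\<lambda>z. - a z) = (\<lambda>y. - push a y)"
  by (simp add: push_def fun_eq_iff sum_negf)

lemma push_zero: "push (\<lambda>_. 0) = (\<lambda>_. 0)" by (simp add: push_def)

lemma push_basis: "push (basis x) = basis (f x)"
proof
  fix y
  have "{z. basis x z \<noteq> 0 \<and> f z = y} = (if f x = y then {x} else {})" by (auto simp: basis_def)
  then show "push (basis x) y = basis (f x) y" by (simp add: push_def basis_def)
qed

lemma push_plus_basis: "a \<in> free_ab X \<Longrightarrow> x \<in> X \<Longrightarrow>
  push (\<lambda>z. a z + basis x z) = (\<lambda>y. push a y + basis (f x) y)"
  using push_add[of a "basis x"] free_ab_basis push_basis by metis

lemma push_minus_basis: assumes "a \<in> free_ab X" "x \<in> X" shows
  "push (\<lambda>z. a z - basis x z) = (\<lambda>y. push a y - basis (f x) y)"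
  using push_add[OF assms(1) free_ab_neg[OF free_ab_basis[OF assms(2)]]] push_neg[of "basis x"] push_basis
  by simp

lemma push_surj: "c \<in> free_ab Y \<Longrightarrow> \<exists>b\<in>free_ab X. push b = c"
proof (induction rule: free_ab_induct)
  case zero then show ?case using push_zero free_ab_zero by blast
next
  case (plus c y)
  then obtain b x where b: "b \<in> free_ab X" "push b = c" and x: "x \<in> X" "f x = y" using fsurj by blast
  then show ?case using push_plus_basis[OF b(1) x(1)] free_ab_plus[OF b(1) free_ab_basis[OF x(1)]] by force
next
  case (minus c y)
  then obtain b x where b: "b \<in> free_ab X" "push b = c" and x: "x \<in> X" "f x = y" using fsurj by blast
  then show ?case using push_minus_basis[OF b(1) x(1)] free_ab_minus[OF b(1) free_ab_basis[OF x(1)]] by force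
qed

lemma pi_push: "a \<in> free_ab X \<Longrightarrow> \<forall>y\<in>X. f (SX.pi a y) = SY.pi (push a) (f y)"
proof (induction rule: free_ab_induct)
  case zero then show ?case by (simp add: SX.pi_zero SY.pi_zero push_zero)
next
  case (plus a x)
  have pa: "push a \<in> free_ab Y" using push_free[OF plus(1)] .
  have fx: "f x \<in> Y" using f_in[OF plus(2)] .
  show ?case
  proof
    fix y assume y: "y \<in> X"
    have "f (SX.pi (\<lambda>z. a z + basis x z) y) = f (opX (SX.pi a x) (SX.pi a y))"
      using SX.pi_in[OF plus(1)] plus(2) y by (simp add: SX.pi_plus[OF plus(1,2)] SX.Fy_def SX.sx_def)
    also have "\<dots> = opY (SY.pi (push a) (f x)) (SY.pi (push a) (f y))"
      using SX.pi_in[OF plus(1)] plus y by (simp add: f_op)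
    also have "\<dots> = SY.pi (push (\<lambda>z. a z + basis x z)) (f y)"
      using SY.pi_in[OF pa] fx f_in[OF y]
      by (simp add: push_plus_basis[OF plus(1,2)] SY.pi_plus[OF pa fx] SY.Fy_def SY.sx_def)
    finally show "f (SX.pi (\<lambda>z. a z + basis x z) y) = SY.pi (push (\<lambda>z. a z + basis x z)) (f y)" .
  qed
next
  case (minus a x)
  define a' where "a' = (\<lambda>z. a z - basis x z)"
  have a'f: "a' \<in> free_ab X" unfolding a'_def by (rule free_ab_minus[OF minus(1) free_ab_basis[OF minus(2)]])
  have pa': "push a' \<in> free_ab Y" using push_free[OF a'f] .
  have fx: "f x \<in> Y" using f_in[OF minus(2)] .
  define q where "q = SX.pi a'"
  define q' where "q' = SY.pi (push a')"
  have e1: "(\<lambda>z. a' z + basis x z) = a" by (simp add: a'_def)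
  have e2: "(\<lambda>y. push a' y + basis (f x) y) = push a"
    using push_minus_basis[OF minus(1,2)] by (simp add: a'_def)
  have pia: "SX.pi a = SX.Fy x q" using SX.pi_plus[OF a'f minus(2)] e1 by (simp add: q_def)
  have pia': "SY.pi (push a) = SY.Fy (f x) q'" using SY.pi_plus[OF pa' fx] e2 by (simp add: q'_def)
  have qX: "\<And>y. y \<in> X \<Longrightarrow> q y \<in> X" using SX.pi_in[OF a'f] by (simp add: q_def)
  have qY: "\<And>y. y \<in> Y \<Longrightarrow> q' y \<in> Y" using SY.pi_in[OF pa'] by (simp add: q'_def)
  have key: "opY (f (q x)) (f (q y)) = opY (q' (f x)) (q' (f y))" if y: "y \<in> X" for y
  proof -
    have "f (SX.pi a y) = SY.pi (push a) (f y)" using minus(3) y by blast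
    then have "f (opX (q x) (q y)) = opY (q' (f x)) (q' (f y))"
      using qX qY minus(2) y fx f_in[OF y] by (simp add: pia pia' SX.Fy_def SY.Fy_def SX.sx_def SY.sx_def)
    then show ?thesis using qX minus(2) y by (simp add: f_op)
  qed
  have xx: "f (q x) = q' (f x)"
    using key[OF minus(2)] SY.T_inj f_in qX qY fx minus(2) by blast
  show ?case
  proof
    fix y assume y: "y \<in> X"
    have "f (q y) = q' (f y)"
      using key[OF y] xx SY.op_inj[of "q' (f x)" "f (q y)" "q' (f y)"] qY fx f_in qX y by simp
    then show "f (SX.pi (\<lambda>z. a z - basis x z) y) = SY.pi (push (\<lambda>z. a z - basis x z)) (f y)"
      by (simp add: q_def q'_def a'_def)
  qed
qed

lemma push_M: assumes a: "a \<in> free_ab X" shows "b \<in> free_ab X \<Longrightarrow> push (SX.M a b) = SY.M (push a) (push b)"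
proof (induction rule: free_ab_induct)
  case zero
  have "SX.M a (\<lambda>_. 0) = (\<lambda>_. 0)" using a by (simp add: SX.M_def free_ab_zero fun_eq_iff)
  moreover have "SY.M (push a) (\<lambda>_. 0) = (\<lambda>_. 0)" using push_free[OF a] by (simp add: SY.M_def free_ab_zero fun_eq_iff)
  ultimately show ?case by (simp add: push_zero)
next
  case (plus b y)
  have pa: "push a \<in> free_ab Y" using push_free[OF a] .
  have "push (SX.M a (\<lambda>z. b z + basis y z)) = push (\<lambda>z. SX.M a b z + basis (SX.pi a y) z)"
    using SX.M_add[OF a plus(1) free_ab_basis[OF plus(2)]] SX.M_basis[OF a plus(2)] by simp
  also have "\<dots> = (\<lambda>z. push (SX.M a b) z + basis (f (SX.pi a y)) z)"
    by (rule push_plus_basis[OF SX.M_free[OF a plus(1)] SX.pi_in[OF a plus(2)]])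
  also have "\<dots> = (\<lambda>z. SY.M (push a) (push b) z + basis (SY.pi (push a) (f y)) z)"
    using plus(3) pi_push[OF a] plus(2) by simp
  also have "\<dots> = SY.M (push a) (\<lambda>z. push b z + basis (f y) z)"
    using SY.M_add[OF pa push_free[OF plus(1)] free_ab_basis[OF f_in[OF plus(2)]]]
      SY.M_basis[OF pa f_in[OF plus(2)]] by simp
  also have "\<dots> = SY.M (push a) (push (\<lambda>z. b z + basis y z))"
    using push_plus_basis[OF plus(1,2)] by simp
  finally show ?case .
next
  case (minus b y)
  have pa: "push a \<in> free_ab Y" using push_free[OF a] .
  have e: "\<And>c (d::'c \<Rightarrow> int). (\<lambda>z. c z - d z) = (\<lambda>z. c z + (\<lambda>z. - d z) z)" by simp
  have "push (SX.M a (\<lambda>z. b z - basis y z)) = push (\<lambda>z. SX.M a b z - basis (SX.pi a y) z)"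
    using SX.M_add[OF a minus(1) free_ab_neg[OF free_ab_basis[OF minus(2)]]] SX.M_minus_basis[OF a minus(2)]
    by (simp only: e)
  also have "\<dots> = (\<lambda>z. push (SX.M a b) z - basis (f (SX.pi a y)) z)"
    by (rule push_minus_basis[OF SX.M_free[OF a minus(1)] SX.pi_in[OF a minus(2)]])
  also have "\<dots> = (\<lambda>z. SY.M (push a) (push b) z - basis (SY.pi (push a) (f y)) z)"
    using minus(3) pi_push[OF a] minus(2) by simp
  also have "\<dots> = SY.M (push a) (\<lambda>z. push b z - basis (f y) z)"
    using SY.M_add[OF pa push_free[OF minus(1)] free_ab_neg[OF free_ab_basis[OF f_in[OF minus(2)]]]]
      SY.M_minus_basis[OF pa f_in[OF minus(2)]] by (simp only: e)
  also have "\<dots> = SY.M (push a) (push (\<lambda>z. b z - basis y z))"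
    using push_minus_basis[OF minus(1,2)] by simp
  finally show ?case .
qed

lemma push_I: assumes "s \<in> SX.I" shows "push s \<in> SY.I"
proof -
  have s: "s \<in> free_ab X" using SX.I_sub[OF assms] .
  have "SY.M (push s) c = c" if c: "c \<in> free_ab Y" for c
  proof -
    obtain b where b: "b \<in> free_ab X" "push b = c" using push_surj[OF c] by blast
    have "SY.M (push s) (push b) = push (SX.M s b)" using push_M[OF s b(1)] by simp
    also have "\<dots> = push b" using SX.I_M[OF assms b(1)] by simp
    finally show ?thesis using b by simp
  qed
  then show ?thesis using push_free[OF s] by (simp add: SY.I_eq)
qed

definition g where "g C = SY.cs (push (SOME v. v \<in> C))"

lemma g_cs: assumes a: "a \<in> free_ab X" shows "g (SX.cs a) = SY.cs (push a)"
proof -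
  define a' where "a' = (SOME v. v \<in> SX.cs a)"
  have a': "a' \<in> free_ab X" "SX.cs a' = SX.cs a" using SX.some_cs[OF a] by (auto simp: a'_def)
  have i: "(\<lambda>z. a' z - a z) \<in> SX.I" using SX.cs_eq_iff[OF a'(1) a] a' by simp
  have "push (\<lambda>z. a' z - a z) = (\<lambda>y. push a' y - push a y)"
    using push_add[OF a'(1) free_ab_neg[OF a]] push_neg[of a] by simp
  then have "(\<lambda>y. push a' y - push a y) \<in> SY.I" using push_I[OF i] by simp
  then have "SY.cs (push a') = SY.cs (push a)"
    using SY.cs_eq_iff push_free a'(1) a by blast
  then show ?thesis by (simp add: g_def a'_def[symmetric])
qed

end




context ncs_hom
begin

lemma carrX: "C \<in> AQ_carrier X opX \<Longrightarrow> \<exists>a\<in>free_ab X. C = SX.cs a"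
  by (auto simp: SX.AQ_carrier_eq)
lemma carrY: "C \<in> AQ_carrier Y opY \<Longrightarrow> \<exists>a\<in>free_ab Y. C = SY.cs a"
  by (auto simp: SY.AQ_carrier_eq)

lemma g_plus: assumes "a \<in> free_ab X" "b \<in> free_ab X"
  shows "g (AQ_plus X opX (SX.cs a) (SX.cs b)) = AQ_plus Y opY (g (SX.cs a)) (g (SX.cs b))"
  using assms by (simp add: SX.AQ_plus_cs g_cs free_ab_plus push_add SY.AQ_plus_cs push_free)

lemma g_op: assumes "a \<in> free_ab X" "b \<in> free_ab X"
  shows "g (AQ_op X opX (SX.cs a) (SX.cs b)) = AQ_op Y opY (g (SX.cs a)) (g (SX.cs b))"
  using assms by (simp add: SX.AQ_op_cs g_cs SX.M_free push_M SY.AQ_op_cs push_free)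

lemma g_hom: "brace_hom (AQ_carrier X opX) (AQ_plus X opX) (AQ_op X opX)
                       (AQ_carrier Y opY) (AQ_plus Y opY) (AQ_op Y opY) g"
  unfolding brace_hom_def
proof (intro conjI ballI)
  fix C assume "C \<in> AQ_carrier X opX"
  then obtain a where a: "a \<in> free_ab X" "C = SX.cs a" using carrX by blast
  then show "g C \<in> AQ_carrier Y opY" using push_free[OF a(1)] by (simp add: g_cs SY.AQ_carrier_eq)
next
  fix C D assume "C \<in> AQ_carrier X opX" "D \<in> AQ_carrier X opX"
  then obtain a b where "a \<in> free_ab X" "C = SX.cs a" "b \<in> free_ab X" "D = SX.cs b"
    using carrX[of C] carrX[of D] by blast
  then show "g (AQ_plus X opX C D) = AQ_plus Y opY (g C) (g D)"
    "g (AQ_op X opX C D) = AQ_op Y opY (g C) (g D)" using g_plus g_op by auto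
qed

lemma g_sigma: "x \<in> X \<Longrightarrow> g (sigma X opX x) = sigma Y opY (f x)"
  by (simp add: SX.sigma_eq SY.sigma_eq g_cs free_ab_basis push_basis)

lemma g_surj: "g ` AQ_carrier X opX = AQ_carrier Y opY"
proof
  show "g ` AQ_carrier X opX \<subseteq> AQ_carrier Y opY" using g_hom by (auto simp: brace_hom_def)
  show "AQ_carrier Y opY \<subseteq> g ` AQ_carrier X opX"
  proof
    fix C assume "C \<in> AQ_carrier Y opY"
    then obtain c where c: "c \<in> free_ab Y" "C = SY.cs c" using carrY by blast
    obtain b where b: "b \<in> free_ab X" "push b = c" using push_surj[OF c(1)] by blast
    have "C = g (SX.cs b)" using c b by (simp add: g_cs)
    moreover have "SX.cs b \<in> AQ_carrier X opX" using b by (simp add: SX.AQ_carrier_eq)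
    ultimately show "C \<in> g ` AQ_carrier X opX" by blast
  qed
qed

lemma g_unique:
  assumes h: "brace_hom (AQ_carrier X opX) (AQ_plus X opX) (AQ_op X opX)
                       (AQ_carrier Y opY) (AQ_plus Y opY) (AQ_op Y opY) h"
    and hs: "\<forall>x\<in>X. h (sigma X opX x) = sigma Y opY (f x)"
  shows "\<forall>C\<in>AQ_carrier X opX. h C = g C"
proof -
  have hin: "\<And>a. a \<in> free_ab X \<Longrightarrow> h (SX.cs a) \<in> AQ_carrier Y opY"
    using h by (simp add: brace_hom_def SX.AQ_carrier_eq)
  have hplus: "\<And>a b. a \<in> free_ab X \<Longrightarrow> b \<in> free_ab X \<Longrightarrow>
      h (SX.cs (\<lambda>z. a z + b z)) = AQ_plus Y opY (h (SX.cs a)) (h (SX.cs b))"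
    using h by (simp add: brace_hom_def SX.AQ_carrier_eq SX.AQ_plus_cs[symmetric])
  have "a \<in> free_ab X \<Longrightarrow> h (SX.cs a) = g (SX.cs a)" for a
  proof (induction rule: free_ab_induct)
    case zero
    obtain c where c: "c \<in> free_ab Y" "h (SX.cs (\<lambda>_. 0)) = SY.cs c" using hin[OF free_ab_zero] carrY by blast
    have "h (SX.cs (\<lambda>z. (\<lambda>_. 0) z + (\<lambda>_. 0) z)) = AQ_plus Y opY (h (SX.cs (\<lambda>_. 0))) (h (SX.cs (\<lambda>_. 0)))"
      by (rule hplus[OF free_ab_zero free_ab_zero])
    then have "SY.cs c = SY.cs (\<lambda>z. c z + c z)" using c by (simp add: SY.AQ_plus_cs)
    then have "(\<lambda>z. c z - (c z + c z)) \<in> SY.I" using SY.cs_eq_iff[OF c(1) free_ab_plus[OF c(1) c(1)]] by simp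
    then have "(\<lambda>z. - c z) \<in> SY.I" by simp
    then have "c \<in> SY.I" using SY.I_neg[of "\<lambda>z. - c z"] by simp
    then have "(\<lambda>z. c z - (\<lambda>_. 0) z) \<in> SY.I" by simp
    then have "SY.cs c = SY.cs (\<lambda>_. 0)" using SY.cs_eq_iff[OF c(1) free_ab_zero] by simp
    then show ?case using c by (simp add: g_cs free_ab_zero push_zero)
  next
    case (plus a x)
    have "h (SX.cs (\<lambda>z. a z + basis x z)) = AQ_plus Y opY (h (SX.cs a)) (h (SX.cs (basis x)))"
      by (rule hplus[OF plus(1) free_ab_basis[OF plus(2)]])
    also have "\<dots> = AQ_plus Y opY (g (SX.cs a)) (g (SX.cs (basis x)))"
      using plus hs g_sigma by (simp add: SX.sigma_eq)
    also have "\<dots> = g (AQ_plus X opX (SX.cs a) (SX.cs (basis x)))"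
      by (rule g_plus[OF plus(1) free_ab_basis[OF plus(2)], symmetric])
    also have "\<dots> = g (SX.cs (\<lambda>z. a z + basis x z))"
      by (simp add: SX.AQ_plus_cs[OF plus(1) free_ab_basis[OF plus(2)]])
    finally show ?case .
  next
    case (minus a x)
    define a' where "a' = (\<lambda>z. a z - basis x z)"
    have a'f: "a' \<in> free_ab X" unfolding a'_def by (rule free_ab_minus[OF minus(1) free_ab_basis[OF minus(2)]])
    have ex: "basis x \<in> free_ab X" using free_ab_basis[OF minus(2)] .
    have e1: "(\<lambda>z. a' z + basis x z) = a" by (simp add: a'_def)
    obtain c where c: "c \<in> free_ab Y" "h (SX.cs a') = SY.cs c" using hin[OF a'f] carrY by blast
    obtain c' where c': "c' \<in> free_ab Y" "g (SX.cs a') = SY.cs c'"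
      using g_cs[OF a'f] push_free[OF a'f] by blast
    have hx: "h (SX.cs (basis x)) = SY.cs (basis (f x))" using hs minus(2) by (simp add: SX.sigma_eq SY.sigma_eq)
    have gx: "g (SX.cs (basis x)) = SY.cs (basis (f x))" using g_sigma[OF minus(2)] by (simp add: SX.sigma_eq SY.sigma_eq)
    have fx: "basis (f x) \<in> free_ab Y" using free_ab_basis[OF f_in[OF minus(2)]] .
    have "h (SX.cs a) = AQ_plus Y opY (SY.cs c) (SY.cs (basis (f x)))"
      using hplus[OF a'f ex] e1 c hx by simp
    also have "\<dots> = SY.cs (\<lambda>z. c z + basis (f x) z)" by (rule SY.AQ_plus_cs[OF c(1) fx])
    finally have 1: "h (SX.cs a) = SY.cs (\<lambda>z. c z + basis (f x) z)" .
    have "g (SX.cs a) = g (AQ_plus X opX (SX.cs a') (SX.cs (basis x)))"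
      using SX.AQ_plus_cs[OF a'f ex] e1 by simp
    also have "\<dots> = AQ_plus Y opY (SY.cs c') (SY.cs (basis (f x)))" using g_plus[OF a'f ex] c' gx by simp
    also have "\<dots> = SY.cs (\<lambda>z. c' z + basis (f x) z)" by (rule SY.AQ_plus_cs[OF c'(1) fx])
    finally have 2: "g (SX.cs a) = SY.cs (\<lambda>z. c' z + basis (f x) z)" .
    have "SY.cs (\<lambda>z. c z + basis (f x) z) = SY.cs (\<lambda>z. c' z + basis (f x) z)" using 1 2 minus(3) by simp
    then have "(\<lambda>z. (c z + basis (f x) z) - (c' z + basis (f x) z)) \<in> SY.I"
      using SY.cs_eq_iff[OF free_ab_plus[OF c(1) fx] free_ab_plus[OF c'(1) fx]] by simp
    then have "(\<lambda>z. c z - c' z) \<in> SY.I" by simp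
    then have "SY.cs c = SY.cs c'" using SY.cs_eq_iff[OF c(1) c'(1)] by simp
    then show ?case using c c' by (simp add: a'_def)
  qed
  then show ?thesis
  proof (intro ballI)
    fix C assume "C \<in> AQ_carrier X opX"
    then obtain a where "a \<in> free_ab X" "C = SX.cs a" using carrX by blast
    then show "h C = g C" using \<open>\<And>a. a \<in> free_ab X \<Longrightarrow> h (SX.cs a) = g (SX.cs a)\<close> by simp
  qed
qed

lemma main:
  "\<exists>g. brace_hom (AQ_carrier X opX) (AQ_plus X opX) (AQ_op X opX)
                       (AQ_carrier Y opY) (AQ_plus Y opY) (AQ_op Y opY) g
           \<and> (\<forall>x\<in>X. g (sigma X opX x) = sigma Y opY (f x))
           \<and> g ` AQ_carrier X opX = AQ_carrier Y opY
           \<and> (\<forall>h. brace_hom (AQ_carrier X opX) (AQ_plus X opX) (AQ_op X opX)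
                       (AQ_carrier Y opY) (AQ_plus Y opY) (AQ_op Y opY) h
                   \<and> (\<forall>x\<in>X. h (sigma X opX x) = sigma Y opY (f x))
                   \<longrightarrow> (\<forall>a\<in>AQ_carrier X opX. h a = g a))"
proof (rule exI[of _ g], intro conjI allI impI)
  show "brace_hom (AQ_carrier X opX) (AQ_plus X opX) (AQ_op X opX)
                       (AQ_carrier Y opY) (AQ_plus Y opY) (AQ_op Y opY) g" by (rule g_hom)
  show "\<forall>x\<in>X. g (sigma X opX x) = sigma Y opY (f x)" using g_sigma by blast
  show "g ` AQ_carrier X opX = AQ_carrier Y opY" by (rule g_surj)
  fix h assume "brace_hom (AQ_carrier X opX) (AQ_plus X opX) (AQ_op X opX)
                       (AQ_carrier Y opY) (AQ_plus Y opY) (AQ_op Y opY) h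
                   \<and> (\<forall>x\<in>X. h (sigma X opX x) = sigma Y opY (f x))"
  then show "\<forall>a\<in>AQ_carrier X opX. h a = g a" using g_unique by blast
qed

end

theorem mainTheorem4:
  fixes X :: "'a set" and opX :: "'a \<Rightarrow> 'a \<Rightarrow> 'a"
    and Y :: "'b set" and opY :: "'b \<Rightarrow> 'b \<Rightarrow> 'b"
    and f :: "'a \<Rightarrow> 'b"
  assumes "nondeg_cycle_set X opX" and "nondeg_cycle_set Y opY"
    and "cycle_set_hom X opX Y opY f" and "f ` X = Y"
  shows "\<exists>g. brace_hom (AQ_carrier X opX) (AQ_plus X opX) (AQ_op X opX)
                       (AQ_carrier Y opY) (AQ_plus Y opY) (AQ_op Y opY) g
           \<and> (\<forall>x\<in>X. g (sigma X opX x) = sigma Y opY (f x))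
           \<and> g ` AQ_carrier X opX = AQ_carrier Y opY
           \<and> (\<forall>h. brace_hom (AQ_carrier X opX) (AQ_plus X opX) (AQ_op X opX)
                       (AQ_carrier Y opY) (AQ_plus Y opY) (AQ_op Y opY) h
                   \<and> (\<forall>x\<in>X. h (sigma X opX x) = sigma Y opY (f x))
                   \<longrightarrow> (\<forall>a\<in>AQ_carrier X opX. h a = g a))"
proof -
  interpret ncs_hom X opX Y opY f
    using assms by (simp add: ncs_hom_def ncs_hom_axioms_def ncs_def)
  show ?thesis by (rule main)
qed


end
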